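(* Let $n\le -1$ be an odd integer. In $\mathbb{F}_2[w]$ one has $$q_n(w)\equiv (w+1)^e\,h(w)\pmod 2,$$ where $e=0$ if $3\nmid n$ and $e=2$ if $3\mid n$, and $h\in\mathbb{F}_2[w]$ is a product of pairwise distinct irreducible polynomials each of degree at least $2$ (so $h$ is squarefree and divisible by neither $w$ nor $w+1$).
   Context: Define $q_n\in\mathbb{Z}[w]$ for odd $n\le -1$ by $q_{-1}=w^3-w^2+2w-7$, $q_{-3}=w^5-2w^4-2w^3+5w^2+3w-9$, $q_{-5}=w^7-2w^6-4w^5+8w^4+4w^3-7w^2+2w-7$, and $q_n=(w^2-1)(q_{n+2}-q_{n+4})+q_{n+6}$ for odd $n<-5$. *)

theory Defs
  imports "HOL-Computational_Algebra.Polynomial" "HOL-Library.Z2"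
begin

text \<open>Q k is q_{-(2k+1)}: Q 0 = q_{-1}, Q 1 = q_{-3}, Q 2 = q_{-5}.\<close>
fun Q :: "nat \<Rightarrow> int poly" where
  "Q 0 = [:-7, 2, -1, 1:]"
| "Q (Suc 0) = [:-9, 3, 5, -2, -2, 1:]"
| "Q (Suc (Suc 0)) = [:-7, 2, -7, 4, 8, -4, -2, 1:]"
| "Q (Suc (Suc (Suc k))) =
     [:-1, 0, 1:] * (Q (Suc (Suc k)) - Q (Suc k)) + Q k"

definition q :: "int \<Rightarrow> int poly" where
  "q n = Q (nat ((- n - 1) div 2))"

text \<open>Reduction mod 2 into F_2[w] (F_2 = type bit).\<close>
definition red2 :: "int poly \<Rightarrow> bit poly" where
  "red2 p = map_poly of_int p"

end

theory Submission imports Defs "HOL-Computational_Algebra.Squarefree" "HOL-Computational_Algebra.Field_as_Ring" "HOL-Computational_Algebra.Polynomial_Factorial" begin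

lemma red2_add: "red2 (a + b) = red2 a + red2 b"
  by (rule poly_eqI) (simp add: red2_def coeff_map_poly)
lemma red2_diff: "red2 (a - b) = red2 a - red2 b"
  by (rule poly_eqI) (simp add: red2_def coeff_map_poly)
lemma red2_mult: "red2 (a * b) = red2 a * red2 b"
  by (rule poly_eqI) (simp add: red2_def coeff_map_poly coeff_mult)

lemma two0: "(2::bit poly) = 0"
proof -
  have "(2::bit poly) = 1 + 1" by (rule one_add_one[symmetric])
  also have "\<dots> = [:1 + 1:]" by (simp only: one_pCons add_pCons add_0_left)
  also have "\<dots> = 0" by simp
  finally show ?thesis .
qed

lemma char2: "(a::bit poly) - b = 2 * c \<Longrightarrow> a = b"
  using two0 by simp

fun D :: "nat \<Rightarrow> bit poly" where
  "D 0 = 0" | "D (Suc 0) = [:0,1:]" | "D (Suc (Suc m)) = [:0,1:] * D (Suc m) + D m"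

declare D.simps(3)[simp del]
lemma Dstep: "D (m+2) = [:0,1:] * D (m+1) + D m"
  by (simp add: D.simps(3))

lemma three1: "(3::bit poly) = 1"
proof -
  have "(3::bit poly) = 2 + 1" by simp
  then show ?thesis by (simp only: two0 add_0_left)
qed

abbreviation X :: "bit poly" where "X \<equiv> [:0,1:]"
abbreviation S :: "bit poly" where "S \<equiv> [:1,0,1:]"

lemma S_eq: "S = 1 + X^2" by (simp add: power2_eq_square one_pCons)
lemma S_Y: "[:1,1:]^2 = S" by (simp add: power2_eq_square)
lemma XS: "X * S = [:0,1,0,1:]" by simp

lemma key: "red2 (Q k) * X = X * S + D (k+2) ^ 2"
proof (induction k rule: Q.induct)
  case 1
  then show ?case by (simp add: red2_def map_poly_pCons power2_eq_square D.simps)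
next
  case 2
  then show ?case by (simp add: red2_def map_poly_pCons power2_eq_square D.simps)
next
  case 3
  then show ?case by (simp add: red2_def map_poly_pCons power2_eq_square D.simps)
next
  case (4 k)
  have r: "red2 [:-1, 0, 1:] = S" by (simp add: red2_def map_poly_pCons)
  have e: "red2 (Q (Suc (Suc (Suc k)))) = S * (red2 (Q (Suc (Suc k))) - red2 (Q (Suc k))) + red2 (Q k)"
    by (simp only: Q.simps red2_add red2_diff red2_mult r)
  have d5: "D (k+5) = X * D (k+4) + D (k+3)" by (simp add: numeral_eq_Suc D.simps(3))
  have d4: "D (k+4) = X * D (k+3) + D (k+2)" by (simp add: numeral_eq_Suc D.simps(3))
  have sq: "D (k+5) ^ 2 = S * (D (k+4)^2 - D(k+3)^2) + D (k+2)^2"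
    apply (rule char2[where c = "X * D (k+4) * D(k+3) + D(k+3)^2 - X * D(k+3) * D(k+2) - D(k+2)^2"])
    unfolding S_eq using d5 d4 by algebra
  have "red2 (Q (Suc (Suc (Suc k)))) * X
     = S * (red2 (Q (Suc (Suc k))) * X - red2 (Q (Suc k)) * X) + red2 (Q k) * X"
    unfolding e by algebra
  also have "\<dots> = S * (D (k+4)^2 - D(k+3)^2) + X * S + D (k+2)^2"
    using 4 by (simp add: numeral_eq_Suc algebra_simps)
  finally have c: "red2 (Q (Suc (Suc (Suc k)))) * X = S * (D (k+4)^2 - D(k+3)^2) + X * S + D (k+2)^2" .
  have n5: "Suc (Suc (Suc k)) + 2 = k + 5" by simp
  show ?case unfolding n5 c sq by (simp only: add_ac)
qed


lemma D1m: "poly (D m) 1 = (if m mod 3 = 0 then 0 else 1)"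
proof (induction m rule: D.induct)
  case 1
  then show ?case by simp
next
  case 2
  then show ?case by simp
next
  case (3 m)
  have e: "poly (D (Suc (Suc m))) 1 = poly (D (Suc m)) 1 + poly (D m) 1" by (simp add: D.simps(3))
  consider "m mod 3 = 0" | "m mod 3 = 1" | "m mod 3 = 2" by arith
  then show ?case
  proof cases
    case 1
    then have "Suc m mod 3 = 1" "Suc (Suc m) mod 3 = 2" by presburger+
    then show ?thesis unfolding e using 3 1 by simp
  next
    case 2
    then have "Suc m mod 3 = 2" "Suc (Suc m) mod 3 = 0" by presburger+
    then show ?thesis unfolding e using 3 2 by simp
  next
    case 3
    then have "Suc m mod 3 = 0" "Suc (Suc m) mod 3 = 1" by presburger+
    then show ?thesis unfolding e using "3.IH" 3 by simp
  qed
qed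

lemma D1: "poly (D m) 1 = (if 3 dvd m then 0 else 1)"
  using D1m[of m] by (simp add: dvd_eq_mod_eq_0)

lemma D6: "D (m+6) = (X^3 + 3 * X) * D (m+3) + D m"
proof -
  have a: "\<And>j. D (j+2) = X * D (j+1) + D j" by (simp add: D.simps(3))
  have n: "m+6 = Suc(Suc(Suc(Suc(Suc(Suc m)))))" "m+3 = Suc(Suc(Suc m))" by simp_all
  note e = D.simps(3)[of m] D.simps(3)[of "Suc m"] D.simps(3)[of "Suc (Suc m)"]
     D.simps(3)[of "Suc (Suc (Suc m))"] D.simps(3)[of "Suc (Suc (Suc (Suc m)))"]
  show ?thesis unfolding n using e by algebra
qed

lemma D3dvd: "X * S dvd D (3 * M)"
proof (induction M rule: less_induct)
  case (less M)
  show ?case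
  proof (cases "M \<le> 1")
    case True
    then have "M = 0 \<or> M = 1" by auto
    then show ?thesis by (auto simp: numeral_eq_Suc D.simps)
  next
    case False
    then obtain j where j: "M = j + 2" by (metis add.commute le_add_diff_inverse2 not_le Suc_1 Suc_leI)
    have e: "X^3 + 3 * X = X * S" unfolding three1 S_eq by algebra
    have "D (3*M) = (X * S) * D (3*j+3) + D (3*j)"
    proof -
      have "3*M = 3*j+6" by (simp add: j)
      then show ?thesis using D6[of "3*j"] unfolding e by simp
    qed
    moreover have "X * S dvd D (3*j)" using less j by simp
    ultimately show ?thesis by (metis dvd_add dvd_triv_left)
  qed
qed

lemma pXS: "pderiv (X * S) = S"
proof -
  have "pderiv [:0,1,0,1:] = [:1,0,3::bit:]" by (simp add: pderiv_pCons)
  then show ?thesis unfolding XS by simp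
qed

lemma deriv_id: "red2 (Q k) + X * pderiv (red2 (Q k)) = S"
proof -
  let ?f = "red2 (Q k)"
  have "pderiv (?f * X) = pderiv (X * S + D (k+2) ^ 2)" by (simp only: key)
  moreover have "pderiv (?f * X) = ?f + X * pderiv ?f" by (simp add: pderiv_mult pderiv_pCons)
  moreover have "pderiv (D (k+2) ^ 2) = 2 * (D (k+2) * pderiv (D (k+2)))"
    by (simp add: power2_eq_square pderiv_mult algebra_simps)
  moreover have "pderiv (X * S) = S" unfolding XS
  proof -
    have "pderiv [:0,1,0,1:] = [:1,0,3::bit:]" by (simp add: pderiv_pCons)
    then show "pderiv [:0,1,0,1:] = S" by simp
  qed
  ultimately show ?thesis by (simp add: pderiv_add two0)
qed



lemma bit01: "(x::bit) = 0 \<or> x = 1" by (cases "x = 0") simp_all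

instantiation bit ::
  "{unique_euclidean_ring, normalization_euclidean_semiring, normalization_semidom_multiplicative}"
begin
definition [simp]: "normalize_bit = (normalize_field :: bit \<Rightarrow> _)"
definition [simp]: "unit_factor_bit = (unit_factor_field :: bit \<Rightarrow> _)"
definition [simp]: "euclidean_size_bit = (euclidean_size_field :: bit \<Rightarrow> _)"
definition [simp]: "division_segment (x :: bit) = 1"
instance
  apply standard
  apply (auto simp: dvd_field_iff)
  done
end

instantiation bit :: euclidean_ring_gcd
begin
definition gcd_bit :: "bit \<Rightarrow> bit \<Rightarrow> bit" where "gcd_bit = Euclidean_Algorithm.gcd"
definition lcm_bit :: "bit \<Rightarrow> bit \<Rightarrow> bit" where "lcm_bit = Euclidean_Algorithm.lcm"
definition Gcd_bit :: "bit set \<Rightarrow> bit" where "Gcd_bit = Euclidean_Algorithm.Gcd"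
definition Lcm_bit :: "bit set \<Rightarrow> bit" where "Lcm_bit = Euclidean_Algorithm.Lcm"
instance by standard (simp_all add: gcd_bit_def lcm_bit_def Gcd_bit_def Lcm_bit_def)
end

instance bit :: field_gcd ..

lemma sq_dvd_pderiv: "p ^ 2 dvd (h :: bit poly) \<Longrightarrow> p dvd pderiv h"
proof -
  assume "p ^ 2 dvd h"
  then obtain g where "h = p * (p * g)" by (auto simp: power2_eq_square dvd_def mult.assoc)
  then show ?thesis by (simp add: pderiv_mult)
qed

lemma prime_dvd_Y:
  assumes "prime (p :: bit poly)" "p dvd [:1,1:]"
  shows "poly p 1 = 0"
proof -
  from assms(2) obtain r where r: "[:1,1:] = p * r" by (auto simp: dvd_def)
  have p0: "p \<noteq> 0" "\<not> is_unit p" using assms(1) by auto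
  then have dp: "degree p \<ge> 1" using is_unit_iff_degree by fastforce
  have "r \<noteq> 0" using r by auto
  then have "degree [:1,1::bit:] = degree p + degree r" using r p0 by (simp add: degree_mult_eq)
  then have "degree r = 0" using dp by simp
  then obtain c where c: "r = [:c:]" by (metis degree_eq_zeroE)
  have "poly [:1,1::bit:] 1 = poly p 1 * c" using r c by simp
  moreover have "c \<noteq> 0" using c \<open>r \<noteq> 0\<close> by auto
  ultimately show ?thesis by simp
qed

lemma final:
  assumes hc: "h + X * pderiv h = c" and cd: "c dvd [:1,1:]^2"
    and h0: "poly h 0 \<noteq> 0" and h1: "poly h 1 \<noteq> 0"
  shows "\<exists>F. finite F \<and> h = (\<Prod>f\<in>F. f) \<and> (\<forall>f\<in>F. irreducible f \<and> degree f \<ge> 2)"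
proof -
  have hnz: "h \<noteq> 0" using h0 by auto
  have nosq: "\<not> p ^ 2 dvd h" if "prime p" for p
  proof
    assume a: "p ^ 2 dvd h"
    then have "p dvd pderiv h" by (rule sq_dvd_pderiv)
    moreover have "p dvd h" using a by (metis dvd_trans dvd_triv_left power2_eq_square)
    ultimately have "p dvd c" using hc by (metis dvd_add dvd_mult)
    then have "p dvd [:1,1:]^2" using cd by (rule dvd_trans)
    then have "p dvd [:1,1:]" using that prime_dvd_power by blast
    then have "poly p 1 = 0" using that prime_dvd_Y by blast
    with \<open>p dvd h\<close> have "poly h 1 = 0" by (metis dvd_def poly_mult mult_zero_left)
    with h1 show False by simp
  qed
  have sf: "squarefree h" using squarefree_factorial_semiring[OF hnz] nosq by blast
  let ?M = "prime_factorization h"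
  have cnt: "count ?M p = 1" if "p \<in> set_mset ?M" for p
  proof -
    have pp: "prime p" using that by (simp add: in_prime_factors_iff)
    have "multiplicity p h \<le> 1" using squarefree_factorial_semiring''[OF hnz] sf pp by blast
    moreover have "count ?M p \<ge> 1" using that by (simp add: Suc_le_eq)
    ultimately show ?thesis using count_prime_factorization_prime[OF pp] by simp
  qed
  have lc: "lead_coeff h = 1" using hnz bit_not_zero_iff leading_coeff_0_iff by blast
  have nh: "normalize h = h" by (rule poly_eqI) (simp add: lc)
  have "h = prod_mset ?M" using prod_mset_prime_factorization[OF hnz] nh by simp
  also have "\<dots> = (\<Prod>f\<in>set_mset ?M. f)" unfolding prod_mset_multiplicity
    by (rule prod.cong) (simp_all add: cnt)
  finally have hp: "h = (\<Prod>f\<in>set_mset ?M. f)" .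
  have irr: "irreducible f \<and> degree f \<ge> 2" if "f \<in> set_mset ?M" for f
  proof -
    have pf: "prime f" and fd: "f dvd h" using that by (auto simp: in_prime_factors_iff)
    have "f \<noteq> 0" "\<not> is_unit f" using pf by auto
    then have d1: "degree f \<ge> 1" using is_unit_iff_degree by fastforce
    have "degree f \<noteq> 1"
    proof
      assume "degree f = 1"
      then obtain a b where ab: "f = [:b, a:]" "a \<noteq> 0" by (rule degree1_coeffs)
      then have a1: "a = 1" by simp
      have "poly f b = 0" using ab a1 by simp
      then have "poly h b = 0" using fd by (metis dvd_def poly_mult mult_zero_left)
      moreover have "b = 0 \<or> b = 1" by (cases "b = 0") simp_all
      ultimately show False using h0 h1 by auto
    qed
    then show ?thesis using d1 pf by (auto intro: prime_elem_imp_irreducible)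
  qed
  show ?thesis using hp irr by (intro exI[of _ "set_mset ?M"]) auto
qed


lemma f_at: "poly (red2 (Q k)) 1 = poly (D (k+2)) 1 * poly (D (k+2)) 1" "poly (red2 (Q k)) 0 = 1"
proof -
  have E: "poly (red2 (Q k)) 1 * poly X 1 = poly X 1 * poly S 1 + poly (D (k+2)) 1 * poly (D (k+2)) 1"
    using arg_cong[OF key, of "\<lambda>p. poly p 1"] by (simp only: poly_mult poly_add power2_eq_square)
  have x1: "poly X 1 = 1" by simp
  have s1: "poly S 1 = 0" by simp
  show "poly (red2 (Q k)) 1 = poly (D (k+2)) 1 * poly (D (k+2)) 1"
    using E unfolding x1 s1 by (simp only: mult_1_right mult_1_left mult_zero_right add_0_left)
  have E0: "poly (red2 (Q k)) 0 + poly X 0 * poly (pderiv (red2 (Q k))) 0 = poly S 0"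
    using arg_cong[OF deriv_id, of "\<lambda>p. poly p 0"] by (simp only: poly_mult poly_add)
  have x0: "poly X 0 = 0" by simp
  have s0: "poly S 0 = 1" by simp
  show "poly (red2 (Q k)) 0 = 1"
    using E0 unfolding x0 s0 by (simp only: mult_zero_left add_0_right)
qed

theorem proposition4p1:
  fixes n :: int
  assumes "odd n" and "n \<le> -1"
  shows "\<exists>(e::nat) (h::bit poly) (F::bit poly set).
           e = (if 3 dvd n then 2 else 0) \<and>
           red2 (q n) = [:1, 1:] ^ e * h \<and>
           finite F \<and> h = (\<Prod>f\<in>F. f) \<and>
           (\<forall>f\<in>F. irreducible f \<and> degree f \<ge> 2)"
proof -
  define k where "k = nat ((- n - 1) div 2)"
  have qn: "q n = Q k" by (simp add: q_def k_def)
  obtain m where m: "n = 2 * m + 1" using assms(1) by (rule oddE)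
  have dm: "(- n - 1) div 2 = - m - 1" unfolding m by presburger
  have mneg: "- m - 1 \<ge> 0" using assms(2) m by linarith
  have kn: "int k * 2 = - n - 1" unfolding k_def dm using mneg m by simp
  have d3: "3 dvd n \<longleftrightarrow> 3 dvd (k+2)"
    using kn by presburger
  let ?f = "red2 (Q k)"
  show ?thesis
  proof (cases "3 dvd n")
    case False
    then have "\<not> 3 dvd (k+2)" using d3 by simp
    then have f1: "poly ?f 1 \<noteq> 0" using f_at(1)[of k] D1[of "k+2"] by simp
    have f0: "poly ?f 0 \<noteq> 0" using f_at(2)[of k] by simp
    have Sd: "S dvd [:1,1:]^2" unfolding S_Y by simp
    obtain F where F: "finite F \<and> ?f = (\<Prod>f\<in>F. f) \<and> (\<forall>f\<in>F. irreducible f \<and> degree f \<ge> 2)"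
      using final[OF deriv_id Sd f0 f1] by blast
    have rq: "red2 (q n) = [:1,1:]^0 * ?f" unfolding qn by simp
    have e0: "(if 3 dvd n then 2 else 0) = (0::nat)" using False by simp
    note F1 = conjunct1[OF F] and F2 = conjunct1[OF conjunct2[OF F]] and F3 = conjunct2[OF conjunct2[OF F]]
    show ?thesis unfolding e0 by (intro exI[of _ 0] exI[of _ ?f] exI[of _ F] conjI refl rq F1 F2 F3)
  next
    case True
    then have "3 dvd (k+2)" using d3 by simp
    then obtain M where M: "k + 2 = 3 * M" by blast
    have "X * S dvd D (k+2)" unfolding M by (rule D3dvd)
    then obtain g where g: "D (k+2) = X * S * g" by (elim dvdE)
    define A where "A = X * S"
    define h where "h = 1 + A * (g * g)"
    have ri1: "\<And>a b c :: bit poly. a * b + (a * b * c) ^ 2 = (b * (1 + a * b * (c * c))) * a"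
      by algebra
    have "?f * X = X * S + (X * S * g) ^ 2" using key[of k] unfolding g .
    also have "\<dots> = (S * h) * X" unfolding h_def A_def by (rule ri1)
    finally have "?f * X = (S * h) * X" .
    moreover have "X \<noteq> 0" by simp
    ultimately have "?f = S * h" using mult_right_cancel by blast
    then have fh: "?f = [:1,1:]^2 * h" unfolding S_Y .
    have pA: "pderiv A = S" unfolding A_def by (rule pXS)
    have ph: "pderiv h = 0 + (A * (g * pderiv g + g * pderiv g) + g * g * S)"
      unfolding h_def by (simp only: pderiv_add pderiv_mult pA pderiv_1)
    have ri2: "\<And>a b c d :: bit poly. a = X * b \<Longrightarrow> 1 + a * (c * c) + X * (0 + (a * (c * d + c * d) + c * c * b))
       = 1 + 2 * (a * (c * c) + X * (a * (c * d)))"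
      by algebra
    have hc: "h + X * pderiv h = 1 + 2 * (A * (g * g) + X * (A * (g * pderiv g)))"
      unfolding ph unfolding h_def by (rule ri2) (rule A_def)
    then have hc': "h + X * pderiv h = 1" unfolding two0 mult_zero_left add_0_right .
    have a0: "poly A 0 = 0" unfolding A_def by (simp only: poly_mult) simp
    have a1: "poly A 1 = 0" unfolding A_def by (simp only: poly_mult) simp
    have h0: "poly h 0 \<noteq> 0" unfolding h_def by (simp only: poly_add poly_mult a0) simp
    have h1: "poly h 1 \<noteq> 0" unfolding h_def by (simp only: poly_add poly_mult a1) simp
    obtain F where F: "finite F \<and> h = (\<Prod>f\<in>F. f) \<and> (\<forall>f\<in>F. irreducible f \<and> degree f \<ge> 2)"
      using final[OF hc' one_dvd h0 h1] by blast
    have rq: "red2 (q n) = [:1,1:]^2 * h" unfolding qn by (rule fh)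
    have e2: "(if 3 dvd n then 2 else 0) = (2::nat)" using True by simp
    note F1 = conjunct1[OF F] and F2 = conjunct1[OF conjunct2[OF F]] and F3 = conjunct2[OF conjunct2[OF F]]
    show ?thesis unfolding e2 by (intro exI[of _ 2] exI[of _ h] exI[of _ F] conjI refl rq F1 F2 F3)
  qed
qed

end
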